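(* Let $K>1$, let $1\le k\le n$, and let $X_1,\ldots,X_n$ be independent non-negative random variables with cdf's $F_1,\ldots,F_n$, each satisfying condition (C) with parameter $K$. Let $q>0$ satisfy $\sum_{i=1}^n F_i(q)\le k-1/2$. Then for every integer $\ell\ge5$, $$\mathbb P\Big\{\operatorname{k\text{-}min}_{1\le i\le n}X_i\le q/K^{\ell}\Big\}\le \frac{4}{2^{\ell/2}}.$$
   Context: For real numbers $a_1,\ldots,a_n$ and $1\le k\le n$, $\operatorname{k\text{-}min}_{i\le n}a_i$ denotes the $k$-th smallest element of the sequence (counted with multiplicity). Condition (C) with parameter $K>1$ for the cdf $F$ of a non-negative random variable: $\frac{F(Kt)}{1-F(Kt)}\ge \frac{2F(t)}{1-F(t)}$ for all $t>0$, with the conventions $1/0=\infty$, $1/\infty=0$. *)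

theory Defs
  imports "HOL-Probability.Probability"
begin

definition kmin :: "nat \<Rightarrow> real list \<Rightarrow> real" where
  "kmin k xs = sort xs ! (k - 1)"

text \<open>The odds p/(1-p) in the extended reals, with the convention 1/0 = infinity
  (only relevant for p = 1, since a cdf takes values in [0,1]).\<close>
definition odds :: "real \<Rightarrow> ereal" where
  "odds p = (if p = 1 then \<infinity> else ereal (p / (1 - p)))"

definition condC :: "real \<Rightarrow> (real \<Rightarrow> real) \<Rightarrow> bool" where
  "condC K F \<longleftrightarrow> (\<forall>t>0. odds (F (K * t)) \<ge> 2 * odds (F t))"

end

theory Submission
  imports Defs
begin


lemma powr_ineq:
  fixes L r :: real assumes "L \<ge> 1" "0 \<le> r" "r \<le> 1"
  shows "L - (L - 1) * r \<ge> L powr (1 - r)"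
proof -
  have c: "convex_on UNIV (\<lambda>x. exp (ln L * x))" by (rule convex_on_exp) (use assms in simp)
  have "exp (ln L * ((1 - (1-r)) * 0 + (1-r) * 1)) \<le> (1 - (1-r)) * exp (ln L * 0) + (1-r) * exp (ln L * 1)"
    using convex_onD[OF c, of "1-r" 0 1] assms by simp
  then show ?thesis using assms by (simp add: powr_def algebra_simps)
qed

lemma key_ineq:
  fixes L r p :: real
  assumes L: "L \<ge> 1" and r: "0 \<le> r" "r \<le> 1" and p: "0 \<le> p" "p \<le> 1"
    and o: "odds r \<ge> ereal L * odds p"
  shows "1 + (L - 1) * p \<le> L powr r"
proof (cases "r = 1")
  case True then show ?thesis proof -
    have "(L - 1) * (1 - p) \<ge> 0" using L p by simp
    then show ?thesis using True by (simp add: algebra_simps)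
  qed
next
  case False
  then have r1: "r < 1" using r by simp
  have "p \<noteq> 1"
  proof
    assume "p = 1" then show False using o False L by (simp add: odds_def)
  qed
  then have p1: "p < 1" using p by simp
  have "L * (p / (1 - p)) \<le> r / (1 - r)" using o False \<open>p \<noteq> 1\<close> by (simp add: odds_def)
  then have "L * p * (1 - r) \<le> r * (1 - p)" using r1 p1 by (simp add: field_simps)
  then have h: "p * (L * (1 - r) + r) \<le> r" by (simp add: algebra_simps)
  have "L * (1 - r) > 0" using L r1 by (intro mult_pos_pos) auto
  then have pos: "L * (1 - r) + r > 0" using r by linarith
  have pl: "p \<le> r / (L * (1 - r) + r)" using h pos by (simp add: field_simps)
  have "1 + (L - 1) * p \<le> 1 + (L - 1) * (r / (L * (1 - r) + r))"
    using mult_left_mono[OF pl, of "L - 1"] L by simp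
  also have "\<dots> = L / (L - (L - 1) * r)" using pos by (simp add: field_simps)
  also have "\<dots> \<le> L / L powr (1 - r)"
  proof -
    have a: "L powr (1 - r) > 0" using L by simp
    have b: "L - (L - 1) * r > 0" using pos by (simp add: algebra_simps)
    show ?thesis using powr_ineq[OF L r] L mult_pos_pos[OF b a] by (intro divide_left_mono) auto
  qed
  also have "\<dots> = L powr r" using L by (simp add: powr_diff)
  finally show ?thesis .
qed

lemma condC_iter:
  assumes "condC K G" "K > 1" "t > 0"
  shows "odds (G (K ^ j * t)) \<ge> ereal (2 ^ j) * odds (G t)"
proof (induction j)
  case 0 then show ?case by simp
next
  case (Suc j)
  have "K ^ j * t > 0" using assms by simp
  then have "odds (G (K * (K ^ j * t))) \<ge> 2 * odds (G (K ^ j * t))" using assms(1) by (simp add: condC_def)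
  moreover have "2 * odds (G (K ^ j * t)) \<ge> 2 * (ereal (2 ^ j) * odds (G t))"
    using Suc by (intro ereal_mult_left_mono) auto
  moreover have "ereal (2 ^ Suc j) * odds (G t) = 2 * (ereal (2 ^ j) * odds (G t))"
    by (simp add: mult.assoc[symmetric])
  ultimately show ?case by (simp add: mult.assoc)
qed

lemma kmin_count:
  fixes xs :: "real list"
  assumes "kmin k xs \<le> t" "1 \<le> k" "k \<le> length xs"
  shows "k \<le> length (filter (\<lambda>x. x \<le> t) xs)"
proof -
  have s: "sorted (sort xs)" by simp
  have all: "\<forall>x\<in>set (take k (sort xs)). x \<le> t"
  proof
    fix x assume "x \<in> set (take k (sort xs))"
    then obtain j where j: "j < k" "x = sort xs ! j" using assms
      by (auto simp: in_set_conv_nth)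
    have j1: "j \<le> k - 1" using j by simp
    have j2: "k - 1 < length (sort xs)" using assms by simp
    have "x \<le> sort xs ! (k - 1)" unfolding j(2) by (rule sorted_nth_mono[OF s j1 j2])
    then show "x \<le> t" using assms(1) by (simp add: kmin_def)
  qed
  have "k = length (filter (\<lambda>x. x \<le> t) (take k (sort xs)))" using all assms by simp
  also have "\<dots> \<le> length (filter (\<lambda>x. x \<le> t) (take k (sort xs) @ drop k (sort xs)))" by (simp only: filter_append length_append)
  also have "\<dots> = length (filter (\<lambda>x. x \<le> t) (sort xs))" by (simp only: append_take_drop_id)
  also have "\<dots> = length (filter (\<lambda>x. x \<le> t) xs)"
    by (metis mset_filter mset_sort size_mset)
  finally show ?thesis .
qed


theorem mainTheorem2:
  fixes M :: "'a measure" and X :: "nat \<Rightarrow> 'a \<Rightarrow> real" and F :: "nat \<Rightarrow> real \<Rightarrow> real"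
    and K q :: real and n k l :: nat
  assumes "prob_space M"
    and "K > 1"
    and "1 \<le> k" and "k \<le> n"
    and "prob_space.indep_vars M (\<lambda>_. borel) X {0..<n}"
    and "\<And>i \<omega>. i < n \<Longrightarrow> \<omega> \<in> space M \<Longrightarrow> X i \<omega> \<ge> 0"
    and "\<And>i t. i < n \<Longrightarrow> F i t = measure M {\<omega> \<in> space M. X i \<omega> \<le> t}"
    and "\<And>i. i < n \<Longrightarrow> condC K (F i)"
    and "q > 0"
    and "(\<Sum>i<n. F i q) \<le> real k - 1/2"
    and "l \<ge> 5"
  shows "measure M {\<omega> \<in> space M. kmin k (map (\<lambda>i. X i \<omega>) [0..<n]) \<le> q / K ^ l}
           \<le> 4 / 2 powr (real l / 2)"
proof -
  interpret prob_space M by fact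
  note indep = assms(5)
  define t where "t = q / K ^ l"
  define L :: real where "L = 2 ^ l"
  have t0: "t > 0" using assms(2,9) by (simp add: t_def)
  have qt: "K ^ l * t = q" using assms(2) by (simp add: t_def)
  have L1: "L \<ge> 1" by (simp add: L_def)
  define Y where "Y i \<omega> = (if X i \<omega> \<le> t then L else 1)" for i \<omega>
  have rvX: "X i \<in> borel_measurable M" if "i \<in> {0..<n}" for i
    using indep that by (auto simp: indep_vars_def)
  have measY: "(\<lambda>x::real. if x \<le> t then L else 1) \<in> borel_measurable borel" by measurable
  have indepY: "indep_vars (\<lambda>_. borel) Y {0..<n}"
    unfolding Y_def by (rule indep_vars_compose2[OF indep, where Y="\<lambda>_ x. if x \<le> t then L else 1"]) (rule measY)
  have measYi: "Y i \<in> borel_measurable M" if "i \<in> {0..<n}" for i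
    using measurable_comp[OF rvX[OF that] measY] unfolding Y_def by (simp add: o_def)
  have intYi: "integrable M (Y i)" if "i \<in> {0..<n}" for i
    by (rule integrable_const_bound[where B=L]) (use measYi[OF that] L1 in \<open>auto simp: Y_def\<close>)
  have intP: "integrable M (\<lambda>\<omega>. \<Prod>i\<in>{0..<n}. Y i \<omega>)"
    by (rule indep_vars_integrable[OF _ indepY intYi]) auto
  have EP: "(\<integral>\<omega>. (\<Prod>i\<in>{0..<n}. Y i \<omega>) \<partial>M) = (\<Prod>i\<in>{0..<n}. \<integral>\<omega>. Y i \<omega> \<partial>M)"
    by (rule indep_vars_lebesgue_integral[OF _ indepY intYi]) auto
  have EY: "(\<integral>\<omega>. Y i \<omega> \<partial>M) = 1 + (L - 1) * F i t" if "i \<in> {0..<n}" for i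
  proof -
    define A where "A = {\<omega> \<in> space M. X i \<omega> \<le> t}"
    have A: "A \<in> sets M" unfolding A_def using rvX[OF that] by measurable
    have "(\<integral>\<omega>. Y i \<omega> \<partial>M) = (\<integral>\<omega>. 1 + (L - 1) * indicator A \<omega> \<partial>M)"
      by (intro Bochner_Integration.integral_cong) (auto simp: Y_def A_def indicator_def)
    also have "\<dots> = 1 + (L - 1) * measure M A"
    proof -
      have i1: "integrable M (\<lambda>\<omega>. indicat_real A \<omega>)" using A
        by (simp add: integrable_indicator_iff emeasure_eq_measure)
      have i2: "integrable M (\<lambda>\<omega>. (L - 1) * indicat_real A \<omega>)" using i1 by simp
      show ?thesis using A
        by (simp add: Bochner_Integration.integral_add[OF _ i2] prob_space)
    qed
    also have "measure M A = F i t" using assms(7) that by (simp add: A_def)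
    finally show ?thesis .
  qed
  have Fr: "0 \<le> F i s \<and> F i s \<le> 1" if "i < n" for i s
    using assms(7)[OF that] by simp
  have bnd: "1 + (L - 1) * F i t \<le> L powr F i q" if "i < n" for i
  proof (rule key_ineq[OF L1])
    show "odds (F i q) \<ge> ereal L * odds (F i t)"
      using condC_iter[OF assms(8)[OF that] assms(2) t0, of l] by (simp add: qt L_def)
  qed (use Fr[OF that] in auto)
  have "(\<integral>\<omega>. (\<Prod>i\<in>{0..<n}. Y i \<omega>) \<partial>M) \<le> (\<Prod>i\<in>{0..<n}. L powr F i q)"
    unfolding EP by (intro prod_mono) (use EY bnd L1 Fr in auto)
  also have "\<dots> = L powr (\<Sum>i\<in>{0..<n}. F i q)" using L1 by (simp add: powr_sum)
  also have "\<dots> \<le> L powr (real k - 1/2)" 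
    using assms(10) L1 by (intro powr_mono) (auto simp: atLeast0LessThan)
  finally have Ebound: "(\<integral>\<omega>. (\<Prod>i\<in>{0..<n}. Y i \<omega>) \<partial>M) \<le> L powr (real k - 1/2)" .
  have sub: "{\<omega> \<in> space M. kmin k (map (\<lambda>i. X i \<omega>) [0..<n]) \<le> q / K ^ l}
      \<subseteq> {\<omega> \<in> space M. (\<Prod>i\<in>{0..<n}. Y i \<omega>) \<ge> L ^ k}"
  proof safe
    fix \<omega> assume w: "\<omega> \<in> space M" "kmin k (map (\<lambda>i. X i \<omega>) [0..<n]) \<le> q / K ^ l"
    have "k \<le> length (filter (\<lambda>x. x \<le> t) (map (\<lambda>i. X i \<omega>) [0..<n]))"
      using kmin_count[OF w(2)[folded t_def] assms(3)] assms(4) by simp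
    also have "\<dots> = card {i\<in>{0..<n}. X i \<omega> \<le> t}"
      by (simp add: length_filter_conv_card) (rule arg_cong[where f=card], auto)
    finally have c: "k \<le> card {i\<in>{0..<n}. X i \<omega> \<le> t}" .
    have "(\<Prod>i\<in>{0..<n}. Y i \<omega>) = L ^ card {i\<in>{0..<n}. X i \<omega> \<le> t}"
      unfolding Y_def
      by (subst prod.If_cases) (simp_all add: Int_def conj_commute)
    then show "L ^ k \<le> (\<Prod>i\<in>{0..<n}. Y i \<omega>)" using c L1 by (simp add: power_increasing)
  qed
  have "measure M {\<omega> \<in> space M. kmin k (map (\<lambda>i. X i \<omega>) [0..<n]) \<le> q / K ^ l}
      \<le> measure M {\<omega> \<in> space M. (\<Prod>i\<in>{0..<n}. Y i \<omega>) \<ge> L ^ k}"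
    by (rule finite_measure_mono[OF sub]) (use intP in measurable)
  also have "\<dots> \<le> (\<integral>\<omega>. (\<Prod>i\<in>{0..<n}. Y i \<omega>) \<partial>M) / L ^ k"
    by (rule integral_Markov_inequality_measure[OF intP]) (use L1 Y_def in \<open>auto intro!: prod_nonneg\<close>)
  also have "\<dots> \<le> L powr (real k - 1/2) / L ^ k"
    using Ebound L1 by (simp add: divide_right_mono)
  also have "\<dots> = 1 / 2 powr (real l / 2)"
  proof -
    have e1: "L ^ k = L powr real k" using L1 by (simp add: powr_realpow)
    have e2: "L powr (real k - 1/2) = L powr real k / L powr (1/2)" by (simp add: powr_diff)
    have e3: "L powr (1/2) = 2 powr (real l/2)"
      by (simp add: L_def powr_realpow[symmetric] powr_powr)
    show ?thesis using L1 unfolding e1 e2 e3 by simp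
  qed
  also have "\<dots> \<le> 4 / 2 powr (real l / 2)" by (simp add: divide_right_mono)
  finally show ?thesis .
qed

end
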